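(* The assignment of the function $\mathsf{h}:G_C[l]\rightarrow G_W[l]$ given by $\mathsf{h}(H,\varrho)=(H,\mu_{(H,\varrho)})$ with $(H,\varrho)\in G_C[l]$ to each $l\in\mathbb{N}$ defines a morphism $\mathsf{h}\in\mathrm{Hom}_{\underline{\rm GM}_\Omega}(G_C\Omega,G_W\Omega)$ of the graded $\Omega$ monads $G_C\Omega$, $G_W\Omega$.
   Context: $\Omega$ is the category of finite ordinals $[l]=\{0,\dots,l-1\}$ and all functions. $G[l]$ is the set of hypergraphs on $[l]$, $Gf(H)=\{f(X)\mid X\in H\}$, $H\smile K=H\cup(K+l)$, $O=\emptyset$. Fix finite additive commutative monoids $\mathsf{A}$, $\mathsf{M}$. $G_C\Omega$ is the calibrated hypergraph graded $\Omega$ monad: $G_C[l]=\{(H,\varrho)\}$ where $\varrho$ assigns to each hyperedge $X$ a function $\varrho_X:\mathsf{A}^X\to\mathsf{M}$; $G_Cf(H,\varrho)=(Gf(H),f_{H*}(\varrho))$ with $f_{H*}(\varrho)_Y=\sum_{X\in H,f(X)=Y}f|_{X*}(\varrho_X)$, $f_*(\varpi)(v)=\sum_{f_\star(w)=v}\varpi(w)$, $f_\star(w)(s)=\sum_{f(r)=s}w(r)$; product $(H,\varrho)\smile(K,\varsigma)=(H\smile K,\varrho\smile\varsigma)$, unit $(O,\varepsilon)$. $G_W\Omega$ is the weighted hypergraph graded $\Omega$ monad: $G_W[l]=\{(H,\alpha)\mid H\in G[l],\alpha\in\mathsf{M}^H\}$, $G_Wf(H,\alpha)=(Gf(H),f_{H*}(\alpha))$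 with $f_{H*}(\alpha)_Y=\sum_{X\in H,f(X)=Y}\alpha_X$, product $(H,\alpha)\smile(K,\beta)=(H\smile K,\alpha\smile\beta)$ where $(\alpha\smile\beta)_X=\alpha_X$ for $X\in H$, $\beta_{X-l}$ for $X\in K+l$, unit $(O,\upsilon)$, $\upsilon=0_\emptyset$. The weight function of $(H,\varrho)$ is $\mu_{(H,\varrho)X}=\sum_{w\in\mathsf{A}^X}\varrho_X(w)$. A morphism of graded $\Omega$ monads is a collection of functions $\mathsf{m}:D[l]\to E[l]$ with $\mathsf{m}\circ Df=Ef\circ\mathsf{m}$, $\mathsf{m}(\lambda\smile\mu)=\mathsf{m}(\lambda)\smile\mathsf{m}(\mu)$, $\mathsf{m}(\iota)=\iota$. *)

theory Defs
  imports Main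
begin

definition hypergraphs :: "nat \<Rightarrow> nat set set set" where
  "hypergraphs l = {H. \<forall>X\<in>H. X \<noteq> {} \<and> X \<subseteq> {..<l}}"

definition Gmap :: "(nat \<Rightarrow> nat) \<Rightarrow> nat set set \<Rightarrow> nat set set" where
  "Gmap f H = (\<lambda>X. f ` X) ` H"

definition shiftE :: "nat \<Rightarrow> nat set \<Rightarrow> nat set" where
  "shiftE l X = (\<lambda>x. x + l) ` X"

definition unshiftE :: "nat \<Rightarrow> nat set \<Rightarrow> nat set" where
  "unshiftE l X = (\<lambda>x. x - l) ` X"

definition Gcup :: "nat \<Rightarrow> nat set set \<Rightarrow> nat set set \<Rightarrow> nat set set" where
  "Gcup l H K = H \<union> shiftE l ` K"

section \<open>A^X: functions X -> A, represented canonically (value 0 outside X)\<close>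

definition Afun :: "nat set \<Rightarrow> (nat \<Rightarrow> 'a::zero) set" where
  "Afun X = {w. \<forall>r. r \<notin> X \<longrightarrow> w r = 0}"

definition fstar :: "(nat \<Rightarrow> nat) \<Rightarrow> nat set \<Rightarrow> (nat \<Rightarrow> 'a::comm_monoid_add) \<Rightarrow> nat \<Rightarrow> 'a" where
  "fstar f X w = (\<lambda>s. \<Sum>r\<in>{r\<in>X. f r = s}. w r)"

definition fpush :: "(nat \<Rightarrow> nat) \<Rightarrow> nat set \<Rightarrow> ((nat \<Rightarrow> 'a::comm_monoid_add) \<Rightarrow> 'm::comm_monoid_add)
    \<Rightarrow> (nat \<Rightarrow> 'a) \<Rightarrow> 'm" where
  "fpush f X \<pi> = (\<lambda>v. \<Sum>w\<in>{w\<in>Afun X. fstar f X w = v}. \<pi> w)"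

type_synonym ('a,'m) calib = "nat set \<Rightarrow> (nat \<Rightarrow> 'a) \<Rightarrow> 'm"

text \<open>Elements (H, rho) with rho_X : A^X -> M for X in H; canonically rho is 0 elsewhere.\<close>
definition GC :: "nat \<Rightarrow> (nat set set \<times> ('a::comm_monoid_add,'m::comm_monoid_add) calib) set" where
  "GC l = {(H, \<rho>). H \<in> hypergraphs l \<and>
      (\<forall>X w. (X \<notin> H \<or> w \<notin> Afun X) \<longrightarrow> \<rho> X w = 0)}"

definition GCmap :: "(nat \<Rightarrow> nat) \<Rightarrow> nat set set \<times> ('a::comm_monoid_add,'m::comm_monoid_add) calib
    \<Rightarrow> nat set set \<times> ('a,'m) calib" where
  "GCmap f = (\<lambda>(H, \<rho>). (Gmap f H,
      (\<lambda>Y v. \<Sum>X\<in>{X\<in>H. f ` X = Y}. fpush f X (\<rho> X) v)))"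

definition GCprod :: "nat \<Rightarrow> nat set set \<times> ('a::comm_monoid_add,'m::comm_monoid_add) calib
    \<Rightarrow> nat set set \<times> ('a,'m) calib \<Rightarrow> nat set set \<times> ('a,'m) calib" where
  "GCprod l = (\<lambda>(H, \<rho>) (K, \<sigma>). (Gcup l H K,
      (\<lambda>X w. if X \<in> H then \<rho> X w
             else if X \<in> shiftE l ` K \<and> w \<in> Afun X then \<sigma> (unshiftE l X) (\<lambda>r. w (r + l))
             else 0)))"

definition GCunit :: "nat set set \<times> ('a::comm_monoid_add,'m::comm_monoid_add) calib" where
  "GCunit = ({}, (\<lambda>_ _. 0))"

definition GW :: "nat \<Rightarrow> (nat set set \<times> (nat set \<Rightarrow> 'm::comm_monoid_add)) set" where
  "GW l = {(H, \<alpha>). H \<in> hypergraphs l \<and> (\<forall>X. X \<notin> H \<longrightarrow> \<alpha> X = 0)}"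

definition GWmap :: "(nat \<Rightarrow> nat) \<Rightarrow> nat set set \<times> (nat set \<Rightarrow> 'm::comm_monoid_add)
    \<Rightarrow> nat set set \<times> (nat set \<Rightarrow> 'm)" where
  "GWmap f = (\<lambda>(H, \<alpha>). (Gmap f H, (\<lambda>Y. \<Sum>X\<in>{X\<in>H. f ` X = Y}. \<alpha> X)))"

definition GWprod :: "nat \<Rightarrow> nat set set \<times> (nat set \<Rightarrow> 'm::comm_monoid_add)
    \<Rightarrow> nat set set \<times> (nat set \<Rightarrow> 'm) \<Rightarrow> nat set set \<times> (nat set \<Rightarrow> 'm)" where
  "GWprod l = (\<lambda>(H, \<alpha>) (K, \<beta>). (Gcup l H K,
      (\<lambda>X. if X \<in> H then \<alpha> X else if X \<in> shiftE l ` K then \<beta> (unshiftE l X) else 0)))"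

definition GWunit :: "nat set set \<times> (nat set \<Rightarrow> 'm::comm_monoid_add)" where
  "GWunit = ({}, (\<lambda>_. 0))"

definition weight :: "nat set set \<times> ('a::comm_monoid_add,'m::comm_monoid_add) calib \<Rightarrow> nat set \<Rightarrow> 'm" where
  "weight = (\<lambda>(H, \<rho>) X. \<Sum>w\<in>Afun X. \<rho> X w)"

definition hmap :: "nat set set \<times> ('a::comm_monoid_add,'m::comm_monoid_add) calib
    \<Rightarrow> nat set set \<times> (nat set \<Rightarrow> 'm)" where
  "hmap Hr = (fst Hr, weight Hr)"

text \<open>D, E given by carriers D[l], action of Omega-morphisms f:[l]->[k] (functions
  with f ` [l] \<subseteq> [k]), graded product D[l] x D[k] -> D[l+k] (depending on l), and unit in D[0].
  A morphism is a family m_l : D[l] -> E[l] commuting with all structure.\<close>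
definition graded_monad_morphism ::
  "(nat \<Rightarrow> 'x set) \<Rightarrow> ((nat \<Rightarrow> nat) \<Rightarrow> 'x \<Rightarrow> 'x) \<Rightarrow> (nat \<Rightarrow> 'x \<Rightarrow> 'x \<Rightarrow> 'x) \<Rightarrow> 'x \<Rightarrow>
   (nat \<Rightarrow> 'y set) \<Rightarrow> ((nat \<Rightarrow> nat) \<Rightarrow> 'y \<Rightarrow> 'y) \<Rightarrow> (nat \<Rightarrow> 'y \<Rightarrow> 'y \<Rightarrow> 'y) \<Rightarrow> 'y \<Rightarrow>
   (nat \<Rightarrow> 'x \<Rightarrow> 'y) \<Rightarrow> bool" where
  "graded_monad_morphism D Df Dp Du E Ef Ep Eu m \<longleftrightarrow>
     (\<forall>l. \<forall>x\<in>D l. m l x \<in> E l) \<and>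
     (\<forall>l k f. f ` {..<l} \<subseteq> {..<k} \<longrightarrow> (\<forall>x\<in>D l. m k (Df f x) = Ef f (m l x))) \<and>
     (\<forall>l k. \<forall>x\<in>D l. \<forall>y\<in>D k. m (l + k) (Dp l x y) = Ep l (m l x) (m k y)) \<and>
     m 0 Du = Eu"

end

theory Submission
  imports Defs "HOL-Library.FuncSet"
begin

lemma finite_Afun:
  assumes "finite X"
  shows "finite (Afun X :: (nat \<Rightarrow> 'a::{zero,finite}) set)"
proof -
  have "Afun X \<subseteq> (\<lambda>g r. if r \<in> X then g r else 0) ` (X \<rightarrow>\<^sub>E (UNIV::'a set))"
  proof
    fix w :: "nat \<Rightarrow> 'a" assume "w \<in> Afun X"
    then have "w = (\<lambda>r. if r \<in> X then restrict w X r else 0)"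
      by (auto simp: Afun_def)
    then show "w \<in> (\<lambda>g r. if r \<in> X then g r else 0) ` (X \<rightarrow>\<^sub>E (UNIV::'a set))"
      by (intro image_eqI[where x="restrict w X"]) auto
  qed
  moreover have "finite (X \<rightarrow>\<^sub>E (UNIV::'a set))" using assms by (intro finite_PiE) auto
  ultimately show ?thesis by (meson finite_imageI finite_subset)
qed

lemma fstar_Afun: "fstar f X w \<in> Afun (f ` X)"
  unfolding Afun_def fstar_def
proof (intro CollectI allI impI)
  fix r assume "r \<notin> f ` X"
  then have "{ra \<in> X. f ra = r} = {}" by auto
  then have "sum w {ra \<in> X. f ra = r} = 0" by (metis sum.empty)
  then show "(\<lambda>s. sum w {ra \<in> X. f ra = s}) r = 0" by simp
qed

lemma push_sum:
  assumes "finite X"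
  shows "(\<Sum>v\<in>Afun (f ` X). fpush f X (\<pi> :: (nat \<Rightarrow> 'a::{comm_monoid_add,finite}) \<Rightarrow> 'm::comm_monoid_add) v)
       = (\<Sum>w\<in>Afun X. \<pi> w)"
proof -
  have fin: "finite (Afun X :: (nat \<Rightarrow> 'a) set)" using finite_Afun assms by blast
  have "(\<Sum>v\<in>Afun (f ` X). fpush f X \<pi> v)
      = (\<Sum>v\<in>Afun (f ` X). \<Sum>w\<in>{w\<in>Afun X. fstar f X w = v}. \<pi> w)"
    by (simp add: fpush_def)
  also have "\<dots> = (\<Sum>w\<in>Afun X. \<pi> w)"
    using sum.group[OF fin finite_Afun[of "f ` X"], of "fstar f X" "\<pi>"] assms fstar_Afun
    by blast
  finally show ?thesis .
qed

lemma shift_sum: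
  fixes \<sigma> :: "(nat \<Rightarrow> 'a::{comm_monoid_add,finite}) \<Rightarrow> 'm::comm_monoid_add"
  shows "(\<Sum>w\<in>Afun (shiftE l Z). \<sigma> (\<lambda>r. w (r + l))) = (\<Sum>u\<in>Afun Z. \<sigma> u)"
proof (rule sum.reindex_bij_witness[where i="\<lambda>u r. if l \<le> r then u (r - l) else 0"
      and j="\<lambda>w r. w (r + l)"])
  fix w :: "nat \<Rightarrow> 'a" assume w: "w \<in> Afun (shiftE l Z)"
  show "(\<lambda>r. w (r + l)) \<in> Afun Z"
  proof -
    have "r + l \<notin> (\<lambda>x. x + l) ` Z" if "r \<notin> Z" for r using that by auto
    then show ?thesis using w by (auto simp: Afun_def shiftE_def)
  qed
  show "(\<lambda>r. if l \<le> r then w (r - l + l) else 0) = w"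
  proof
    fix r
    have "r \<notin> (\<lambda>x. x + l) ` Z" if "\<not> l \<le> r" using that by auto
    then show "(if l \<le> r then w (r - l + l) else 0) = w r"
      using w by (auto simp: Afun_def shiftE_def)
  qed
  show "\<sigma> (\<lambda>r. w (r + l)) = \<sigma> (\<lambda>r. w (r + l))" by simp
next
  fix u :: "nat \<Rightarrow> 'a" assume u: "u \<in> Afun Z"
  show "(\<lambda>r. if l \<le> r then u (r - l) else 0) \<in> Afun (shiftE l Z)"
    using u by (auto simp: Afun_def shiftE_def image_iff) (metis le_add_diff_inverse2)
  show "(\<lambda>r. if l \<le> (r + l) then u (r + l - l) else 0) = u" by simp
qed

lemma unshift_shift: "unshiftE l (shiftE l Z) = Z"
  by (simp add: unshiftE_def shiftE_def image_image)

theorem proposition3p43: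
  shows "graded_monad_morphism
           (GC :: nat \<Rightarrow> (nat set set \<times> ('a::{comm_monoid_add,finite},'m::{comm_monoid_add,finite}) calib) set)
           GCmap GCprod GCunit
           GW GWmap GWprod GWunit
           (\<lambda>l. hmap)"
  unfolding graded_monad_morphism_def
proof (intro conjI allI impI ballI)
  fix l and x :: "nat set set \<times> ('a,'m) calib" assume "x \<in> GC l"
  then show "hmap x \<in> GW l"
    by (cases x) (auto simp: GC_def GW_def hmap_def weight_def)
next
  fix l k and f :: "nat \<Rightarrow> nat" and x :: "nat set set \<times> ('a,'m) calib"
  assume "x \<in> GC l"
  then obtain H \<rho> where x: "x = (H, \<rho>)" and H: "H \<in> hypergraphs l" by (cases x) (auto simp: GC_def)
  have finX: "finite X" if "X \<in> H" for X
  proof -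
    have "X \<subseteq> {..<l}" using H that by (auto simp: hypergraphs_def)
    then show ?thesis using finite_subset by blast
  qed
  have finH: "finite {X \<in> H. f ` X = Y}" for Y
  proof -
    have "H \<subseteq> Pow {..<l}" using H by (auto simp: hypergraphs_def)
    then have "finite H" using finite_subset by blast
    then show ?thesis by simp
  qed
  have "(\<Sum>v\<in>Afun Y. \<Sum>X\<in>{X \<in> H. f ` X = Y}. fpush f X (\<rho> X) v)
       = (\<Sum>X\<in>{X \<in> H. f ` X = Y}. \<Sum>w\<in>Afun X. \<rho> X w)" for Y
  proof -
    have "(\<Sum>v\<in>Afun Y. \<Sum>X\<in>{X \<in> H. f ` X = Y}. fpush f X (\<rho> X) v)
        = (\<Sum>X\<in>{X \<in> H. f ` X = Y}. \<Sum>v\<in>Afun Y. fpush f X (\<rho> X) v)"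
      by (rule sum.swap)
    also have "\<dots> = (\<Sum>X\<in>{X \<in> H. f ` X = Y}. \<Sum>w\<in>Afun X. \<rho> X w)"
    proof (rule sum.cong[OF refl])
      fix X assume "X \<in> {X \<in> H. f ` X = Y}"
      then have "f ` X = Y" "finite X" using finX by auto
      then show "(\<Sum>v\<in>Afun Y. fpush f X (\<rho> X) v) = (\<Sum>w\<in>Afun X. \<rho> X w)"
        using push_sum[of X f "\<rho> X"] by simp
    qed
    finally show ?thesis .
  qed
  then show "hmap (GCmap f x) = GWmap f (hmap x)"
    by (simp add: x hmap_def GCmap_def GWmap_def weight_def)
next
  fix l k and x y :: "nat set set \<times> ('a,'m) calib"
  assume "x \<in> GC l" "y \<in> GC k"
  then obtain H \<rho> K \<sigma> where x: "x = (H, \<rho>)" and y: "y = (K, \<sigma>)"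
    by (cases x, cases y) auto
  have "(\<Sum>w\<in>Afun X. (if X \<in> H then \<rho> X w
             else if X \<in> shiftE l ` K \<and> w \<in> Afun X then \<sigma> (unshiftE l X) (\<lambda>r. w (r + l))
             else 0))
      = (if X \<in> H then \<Sum>w\<in>Afun X. \<rho> X w else if X \<in> shiftE l ` K
           then \<Sum>w\<in>Afun (unshiftE l X). \<sigma> (unshiftE l X) w else 0)" for X
  proof (cases "X \<in> H")
    case False
    show ?thesis
    proof (cases "X \<in> shiftE l ` K")
      case True
      then obtain Z where Z: "X = shiftE l Z" by auto
      have "(\<Sum>w\<in>Afun X. (if X \<in> H then \<rho> X w
             else if X \<in> shiftE l ` K \<and> w \<in> Afun X then \<sigma> (unshiftE l X) (\<lambda>r. w (r + l))
             else 0)) = (\<Sum>w\<in>Afun X. \<sigma> Z (\<lambda>r. w (r + l)))"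
        using False True Z unshift_shift by (intro sum.cong) auto
      also have "\<dots> = (\<Sum>u\<in>Afun Z. \<sigma> Z u)" using shift_sum[of "\<sigma> Z" l Z] Z by simp
      finally show ?thesis using False True Z unshift_shift by simp
    qed (use False in simp)
  qed simp
  then show "hmap (GCprod l x y) = GWprod l (hmap x) (hmap y)"
    by (simp add: x y hmap_def GCprod_def GWprod_def weight_def)
next
  show "hmap GCunit = GWunit"
    by (simp add: hmap_def GCunit_def GWunit_def weight_def fun_eq_iff)
qed

end
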